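(* Let $(B,\lfloor\cdot,\cdot\rfloor)$ be an SSD space with quadratic form $q$ and let $A\subset B$ be $q$-positive. If $\Phi_A(b)\ge q(b)$ for all $b\in\operatorname{conv}^w A$, then $G_{\Phi_A}=\mathcal{P}_q(\Phi_A^{@})$.
   Context: An SSD space is a pair $(B,\lfloor\cdot,\cdot\rfloor)$ with $B$ a nonzero real vector space and $\lfloor\cdot,\cdot\rfloor$ a symmetric bilinear form; $q(b)=\frac12\lfloor b,b\rfloor$. $w(B,B)$ is the coarsest topology on $B$ making all maps $b\mapsto\lfloor b,c\rfloor$ continuous; $\operatorname{conv}^w A$ is the $w(B,B)$-closure of the convex hull of $A$. A nonempty $A\subset B$ is $q$-positive if $q(b-c)\ge0$ for all $b,c\in A$. $\Phi_A(x)=\sup_{a\in A}\{\lfloor x,a\rfloor-q(a)\}$. For proper convex $f$, $f^{@}(b)=\sup_{c\in B}\{\lfloor c,b\rfloor-f(c)\}$, $\mathcal{P}_q(f)=\{b: f(b)=q(b)\}$, $G_f=\{b: f(b)+f^{@}(b)=\lfloor b,b\rfloor\}$. *)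

theory Defs
  imports "HOL-Analysis.Analysis"
begin

definition SSD_space :: "('a::real_vector \<Rightarrow> 'a \<Rightarrow> real) \<Rightarrow> bool" where
  "SSD_space s \<longleftrightarrow> (\<exists>x::'a. x \<noteq> 0) \<and> (\<forall>b c. s b c = s c b)
     \<and> (\<forall>c. linear (\<lambda>b. s b c))"

definition qf :: "('a \<Rightarrow> 'a \<Rightarrow> real) \<Rightarrow> 'a \<Rightarrow> real" where
  "qf s b = s b b / 2"

definition wtop :: "('a \<Rightarrow> 'a \<Rightarrow> real) \<Rightarrow> 'a topology" where
  "wtop s = topology_generated_by {{b. s b c \<in> U} | c U. open U}"

definition convw :: "('a::real_vector \<Rightarrow> 'a \<Rightarrow> real) \<Rightarrow> 'a set \<Rightarrow> 'a set" where
  "convw s A = (wtop s) closure_of (convex hull A)"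

definition q_positive :: "('a::real_vector \<Rightarrow> 'a \<Rightarrow> real) \<Rightarrow> 'a set \<Rightarrow> bool" where
  "q_positive s A \<longleftrightarrow> A \<noteq> {} \<and> (\<forall>b\<in>A. \<forall>c\<in>A. qf s (b - c) \<ge> 0)"

definition PhiA :: "('a \<Rightarrow> 'a \<Rightarrow> real) \<Rightarrow> 'a set \<Rightarrow> 'a \<Rightarrow> ereal" where
  "PhiA s A x = (SUP a\<in>A. ereal (s x a - qf s a))"

definition fenchel_at :: "('a \<Rightarrow> 'a \<Rightarrow> real) \<Rightarrow> ('a \<Rightarrow> ereal) \<Rightarrow> 'a \<Rightarrow> ereal" where
  "fenchel_at s f b = (SUP c. ereal (s c b) - f c)"

definition Pq :: "('a \<Rightarrow> 'a \<Rightarrow> real) \<Rightarrow> ('a \<Rightarrow> ereal) \<Rightarrow> 'a set" where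
  "Pq s f = {b. f b = ereal (qf s b)}"

definition Gf :: "('a \<Rightarrow> 'a \<Rightarrow> real) \<Rightarrow> ('a \<Rightarrow> ereal) \<Rightarrow> 'a set" where
  "Gf s f = {b. f b + fenchel_at s f b = ereal (s b b)}"

end

theory Submission
  imports Defs
begin

lemma bil:
  fixes s :: "'a::real_vector \<Rightarrow> 'a \<Rightarrow> real"
  assumes lin: "\<forall>c. linear (\<lambda>b. s b c)" and sym: "\<forall>b c. s b c = s c b"
  shows "s (x + y) c = s x c + s y c" "s (x - y) c = s x c - s y c"
    "s (r *\<^sub>R x) c = r * s x c" "s c (x + y) = s c x + s c y"
    "s c (x - y) = s c x - s c y" "s c (r *\<^sub>R x) = r * s c x"
    "s (-x) c = - s x c" "s c (-x) = - s c x"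
proof -
  have l: "linear (\<lambda>b. s b c)" using lin by blast
  show 1: "s (x + y) c = s x c + s y c" using linear_add[OF l] by simp
  show 2: "s (x - y) c = s x c - s y c" using linear_diff[OF l] by simp
  show 3: "s (r *\<^sub>R x) c = r * s x c" using linear_scale[OF l] by simp
  show 7: "s (-x) c = - s x c" using linear_neg[OF l] by simp
  have sc: "s c z = s z c" for z using sym by blast
  show "s c (x + y) = s c x + s c y" unfolding sc by (rule 1)
  show "s c (x - y) = s c x - s c y" unfolding sc by (rule 2)
  show "s c (r *\<^sub>R x) = r * s c x" unfolding sc by (rule 3)
  show "s c (-x) = - s c x" unfolding sc by (rule 7)
qed

lemma s_sum2:
  fixes s :: "'a::real_vector \<Rightarrow> 'a \<Rightarrow> real"
  assumes lin: "\<forall>c. linear (\<lambda>b. s b c)" and sym: "\<forall>b c. s b c = s c b"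
  shows "s x (\<Sum>c\<in>F. w c *\<^sub>R c) = (\<Sum>c\<in>F. w c * s x c)"
proof -
  have l: "linear (\<lambda>b. s b x)" using lin by blast
  have "s (\<Sum>c\<in>F. w c *\<^sub>R c) x = (\<Sum>c\<in>F. s (w c *\<^sub>R c) x)"
    using linear_sum[OF l] by simp
  also have "\<dots> = (\<Sum>c\<in>F. w c * s x c)"
  proof (intro sum.cong refl)
    fix c show "s (w c *\<^sub>R c) x = w c * s x c" using linear_scale[OF l] sym by simp
  qed
  moreover have "s x (\<Sum>c\<in>F. w c *\<^sub>R c) = s (\<Sum>c\<in>F. w c *\<^sub>R c) x" using sym by blast
  ultimately show ?thesis by simp
qed

lemma sep:
  fixes s :: "'a::real_vector \<Rightarrow> 'a \<Rightarrow> real"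
  assumes lin: "\<forall>c. linear (\<lambda>b. s b c)" and sym: "\<forall>b c. s b c = s c b"
    and K: "convex K" "K \<noteq> {}" and F: "finite F" and e: "\<epsilon> > 0"
    and far: "\<forall>x\<in>K. \<exists>c\<in>F. \<epsilon> \<le> \<bar>s x c - s z c\<bar>"
  shows "\<exists>c' d. d > 0 \<and> (\<forall>x\<in>K. s x c' + d \<le> s z c')"
proof -
  note B = bil[OF lin sym]
  define N where "N x = (\<Sum>c\<in>F. (s x c - s z c)^2)" for x
  have Nlow: "\<epsilon>^2 \<le> N x" if "x \<in> K" for x
  proof -
    have "\<exists>c\<in>F. \<epsilon> \<le> \<bar>s x c - s z c\<bar>" by (rule bspec[OF far that])
    then obtain c where c: "c \<in> F" "\<epsilon> \<le> \<bar>s x c - s z c\<bar>" by (rule bexE)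
    have "\<epsilon>^2 \<le> \<bar>s x c - s z c\<bar>^2" using e by (intro power_mono[OF c(2)]) simp
    also have "\<dots> = (s x c - s z c)^2" by simp
    also have "\<dots> \<le> N x" unfolding N_def by (rule member_le_sum[OF c(1) _ F]) simp
    finally show ?thesis .
  qed
  define D where "D = Inf (N ` K)"
  have Nnn: "0 \<le> N x" for x unfolding N_def by (intro sum_nonneg) auto
  have bdd: "bdd_below (N ` K)" using Nnn by (intro bdd_belowI[where m=0]) auto
  have DleN: "D \<le> N x" if "x \<in> K" for x unfolding D_def using bdd that by (auto intro: cInf_lower)
  have Dpos: "\<epsilon>^2 \<le> D" unfolding D_def using K(2) Nlow by (intro cInf_greatest) auto
  have "\<exists>x\<in>K. N x < D + inverse (real (Suc k))" for k
  proof -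
    have "Inf (N ` K) < D + inverse (real (Suc k))" unfolding D_def by simp
    then obtain y where "y \<in> N ` K" "y < D + inverse (real (Suc k))"
      using cInf_lessD[of "N ` K"] K(2) by blast
    then show ?thesis by blast
  qed
  then obtain xs where xs: "\<And>k. xs k \<in> K" "\<And>k. N (xs k) < D + inverse (real (Suc k))"
    by metis
  have para: "(\<Sum>c\<in>F. (s x c - s y c)^2) \<le> 2 * N x + 2 * N y - 4 * D"
    if "x \<in> K" "y \<in> K" for x y
  proof -
    define m where "m = (1/2) *\<^sub>R x + (1/2) *\<^sub>R y"
    have mK: "m \<in> K" unfolding m_def using K(1) that by (intro convexD) auto
    have sm: "s m c = (s x c + s y c) / 2" for c unfolding m_def B by simp
    have "(\<Sum>c\<in>F. (s x c - s y c)^2) = (\<Sum>c\<in>F. 2 * (s x c - s z c)^2 + 2 * (s y c - s z c)^2 - 4 * (s m c - s z c)^2)"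
      by (intro sum.cong refl) (simp add: sm power2_eq_square algebra_simps)
    also have "\<dots> = 2 * N x + 2 * N y - 4 * N m"
      unfolding N_def by (simp add: sum.distrib sum_subtractf sum_distrib_left)
    finally show ?thesis using DleN[OF mK] by simp
  qed
  define L where "L c = lim (\<lambda>k. s (xs k) c)" for c
  have conv: "(\<lambda>k. s (xs k) c) \<longlonglongrightarrow> L c" if c: "c \<in> F" for c
  proof -
    have "Cauchy (\<lambda>k. s (xs k) c)"
    proof (rule metric_CauchyI)
      fix e :: real assume ep: "e > 0"
      have e2: "e^2 > 0" using ep by simp
      obtain M :: nat where M: "4 / e^2 < real M" using reals_Archimedean2[of "4 / e^2"] by (elim exE) (rule that)
      have "\<forall>m\<ge>M. \<forall>n\<ge>M. dist (s (xs m) c) (s (xs n) c) < e"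
      proof (intro allI impI)
        fix m n assume mn: "m \<ge> M" "n \<ge> M"
        have "(s (xs m) c - s (xs n) c)^2 \<le> (\<Sum>c\<in>F. (s (xs m) c - s (xs n) c)^2)"
          by (rule member_le_sum[OF c _ F]) simp
        also have "\<dots> \<le> 2 * N (xs m) + 2 * N (xs n) - 4 * D" by (rule para[OF xs(1) xs(1)])
        also have "\<dots> < 2 * inverse (real (Suc m)) + 2 * inverse (real (Suc n))"
          using xs(2)[of m] xs(2)[of n] by linarith
        also have "\<dots> \<le> 4 * inverse (real (Suc M))"
        proof -
          have "inverse (real (Suc m)) \<le> inverse (real (Suc M))" "inverse (real (Suc n)) \<le> inverse (real (Suc M))"
            using mn by (auto intro!: le_imp_inverse_le)
          then show ?thesis by linarith
        qed
        also have "\<dots> < e^2"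
        proof -
          have "4 / e^2 < real (Suc M)" using M by simp
          then have "4 < real (Suc M) * e^2" by (simp only: pos_divide_less_eq[OF e2])
          then have "4 / real (Suc M) < e^2" by (subst pos_divide_less_eq) (simp_all add: mult.commute)
          then show ?thesis by (simp add: divide_inverse)
        qed
        finally have "\<bar>s (xs m) c - s (xs n) c\<bar>^2 < e^2" by simp
        then have "\<bar>s (xs m) c - s (xs n) c\<bar> < e" by (rule power2_less_imp_less) (use ep in simp)
        then show "dist (s (xs m) c) (s (xs n) c) < e" by (simp add: dist_real_def)
      qed
      then show "\<exists>M. \<forall>m\<ge>M. \<forall>n\<ge>M. dist (s (xs m) c) (s (xs n) c) < e" by (rule exI)
    qed
    then show ?thesis unfolding L_def by (rule convergent_LIMSEQ_iff[THEN iffD1, OF Cauchy_convergent])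
  qed
  define w where "w c = L c - s z c" for c
  have ND: "(\<lambda>k. N (xs k)) \<longlonglongrightarrow> D"
  proof (rule tendsto_sandwich[where f="\<lambda>_. D" and h="\<lambda>k. D + inverse (real (Suc k))"])
    show "\<forall>\<^sub>F n in sequentially. D \<le> N (xs n)" by (intro always_eventually allI DleN xs(1))
    show "\<forall>\<^sub>F n in sequentially. N (xs n) \<le> D + inverse (real (Suc n))" by (intro always_eventually allI less_imp_le xs(2))
    show "(\<lambda>k. D + inverse (real (Suc k))) \<longlonglongrightarrow> D" by (rule LIMSEQ_inverse_real_of_nat_add)
  qed simp
  have "(\<lambda>k. N (xs k)) \<longlonglongrightarrow> (\<Sum>c\<in>F. (L c - s z c)^2)"
    unfolding N_def by (intro tendsto_sum tendsto_intros conv)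
  then have Dw: "D = (\<Sum>c\<in>F. (w c)^2)" using ND LIMSEQ_unique unfolding w_def by blast
  have Pnn: "0 \<le> (\<Sum>c\<in>F. w c * (s x c - L c))" if x: "x \<in> K" for x
  proof -
    define P where "P = (\<Sum>c\<in>F. w c * (s x c - L c))"
    define Q where "Q = (\<Sum>c\<in>F. (s x c - L c)^2)"
    have Qnn: "Q \<ge> 0" unfolding Q_def by (intro sum_nonneg) auto
    have key: "0 \<le> 2 * P + u * Q" if u: "0 < u" "u \<le> 1" for u
    proof -
      define p where "p k = (1 - u) *\<^sub>R xs k + u *\<^sub>R x" for k
      have pK: "p k \<in> K" for k unfolding p_def using K(1) xs(1) x u by (intro convexD) auto
      have sp: "s (p k) c = (1 - u) * s (xs k) c + u * s x c" for k c unfolding p_def B by simp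
      have "(\<lambda>k. N (p k)) \<longlonglongrightarrow> (\<Sum>c\<in>F. ((1 - u) * L c + u * s x c - s z c)^2)"
        unfolding N_def sp by (intro tendsto_sum tendsto_intros conv)
      then have "D \<le> (\<Sum>c\<in>F. ((1 - u) * L c + u * s x c - s z c)^2)"
        using DleN pK by (intro LIMSEQ_le_const) auto
      also have "\<dots> = (\<Sum>c\<in>F. (w c)^2 + 2 * u * (w c * (s x c - L c)) + u^2 * (s x c - L c)^2)"
        by (intro sum.cong refl) (simp add: w_def power2_eq_square algebra_simps)
      also have "\<dots> = D + 2 * u * P + u^2 * Q"
        unfolding Dw P_def Q_def by (simp add: sum.distrib sum_distrib_left)
      finally have "0 \<le> u * (2 * P + u * Q)" by (simp add: power2_eq_square algebra_simps)
      then show ?thesis using u by (simp add: zero_le_mult_iff)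
    qed
    show ?thesis unfolding P_def[symmetric]
    proof (rule ccontr)
      assume "\<not> 0 \<le> P"
      then have Pn: "P < 0" by simp
      define u where "u = min 1 (- P / (Q + 1))"
      have "0 < - P / (Q + 1)" using Pn Qnn by (intro divide_pos_pos) auto
      then have u0: "0 < u" unfolding u_def by simp
      have u1: "u \<le> 1" unfolding u_def by auto
      have "u * Q \<le> (- P / (Q + 1)) * Q" unfolding u_def using Qnn by (intro mult_right_mono) auto
      also have "\<dots> \<le> - P"
      proof -
        have "(- P / (Q + 1)) * Q = - P * (Q / (Q + 1))" by simp
        also have "\<dots> \<le> - P * 1" using Pn Qnn by (intro mult_left_mono) auto
        finally show ?thesis by simp
      qed
      finally have "2 * P + u * Q < 0" using Pn by simp
      then show False using key[OF u0 u1] by simp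
    qed
  qed
  define c0 where "c0 = (\<Sum>c\<in>F. w c *\<^sub>R c)"
  have sc0: "s x c0 = (\<Sum>c\<in>F. w c * s x c)" for x unfolding c0_def by (rule s_sum2[OF lin sym])
  show ?thesis
  proof (intro exI conjI ballI)
    show "D > 0" using Dpos e by (meson less_le_trans zero_less_power)
    fix x assume x: "x \<in> K"
    have "(\<Sum>c\<in>F. w c * (s x c - L c)) = (\<Sum>c\<in>F. w c * s x c - w c * s z c - (w c)^2)"
      by (intro sum.cong refl) (simp add: w_def power2_eq_square algebra_simps)
    also have "\<dots> = (\<Sum>c\<in>F. w c * s x c) - (\<Sum>c\<in>F. w c * s z c) - D"
      unfolding Dw by (simp only: sum_subtractf)
    finally have "(\<Sum>c\<in>F. w c * s x c) - (\<Sum>c\<in>F. w c * s z c) - D = (\<Sum>c\<in>F. w c * (s x c - L c))" by simp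
    then have "s z c0 + D \<le> s x c0" using Pnn[OF x] unfolding sc0 by linarith
    then show "s x (- c0) + D \<le> s z (- c0)" using B by simp
  qed
qed

lemma nbhd:
  fixes s :: "'a::real_vector \<Rightarrow> 'a \<Rightarrow> real"
  assumes "openin (wtop s) U" "z \<in> U"
  shows "\<exists>F \<epsilon>. finite F \<and> \<epsilon> > 0 \<and> {x. \<forall>c\<in>F. \<bar>s x c - s z c\<bar> < \<epsilon>} \<subseteq> U"
proof -
  have "generate_topology_on {{b. s b c \<in> U} | c U. open U} U"
    using assms(1) unfolding wtop_def by (rule openin_topology_generated_by)
  then show ?thesis using assms(2)
  proof (induction arbitrary: z)
    case Empty then show ?case by simp
  next
    case (Int a b)
    obtain F1 e1 where 1: "finite F1" "e1 > 0" "{x. \<forall>c\<in>F1. \<bar>s x c - s z c\<bar> < e1} \<subseteq> a"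
      using Int.IH(1)[of z] Int.prems by blast
    obtain F2 e2 where 2: "finite F2" "e2 > 0" "{x. \<forall>c\<in>F2. \<bar>s x c - s z c\<bar> < e2} \<subseteq> b"
      using Int.IH(2)[of z] Int.prems by blast
    show ?case
    proof (intro exI conjI)
      show "finite (F1 \<union> F2)" using 1 2 by simp
      show "min e1 e2 > 0" using 1 2 by simp
      show "{x. \<forall>c\<in>F1 \<union> F2. \<bar>s x c - s z c\<bar> < min e1 e2} \<subseteq> a \<inter> b"
      proof
        fix x assume "x \<in> {x. \<forall>c\<in>F1 \<union> F2. \<bar>s x c - s z c\<bar> < min e1 e2}"
        then have "\<forall>c\<in>F1. \<bar>s x c - s z c\<bar> < e1" "\<forall>c\<in>F2. \<bar>s x c - s z c\<bar> < e2" by auto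
        then show "x \<in> a \<inter> b" using 1(3) 2(3) by blast
      qed
    qed
  next
    case (UN K)
    then obtain k where "k \<in> K" "z \<in> k" by blast
    with UN.IH[of k z] show ?case by blast
  next
    case (Basis S)
    then obtain c V where S: "S = {b. s b c \<in> V}" "open V" by blast
    with Basis have "s z c \<in> V" by simp
    then obtain e where e: "e > 0" "ball (s z c) e \<subseteq> V" using S(2) open_contains_ball by blast
    show ?case
    proof (intro exI conjI)
      show "finite {c}" by simp
      show "{x. \<forall>c'\<in>{c}. \<bar>s x c' - s z c'\<bar> < e} \<subseteq> S"
      proof
        fix x assume "x \<in> {x. \<forall>c'\<in>{c}. \<bar>s x c' - s z c'\<bar> < e}"
        then have "\<bar>s x c - s z c\<bar> < e" by simp
        then have "s x c \<in> ball (s z c) e" by (simp add: dist_real_def abs_minus_commute)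
        then show "x \<in> S" using e S by blast
      qed
    qed (use e in auto)
  qed
qed

lemma notin_closure:
  fixes s :: "'a::real_vector \<Rightarrow> 'a \<Rightarrow> real"
  assumes "b \<notin> convw s A"
  shows "\<exists>F \<epsilon>. finite F \<and> \<epsilon> > 0 \<and> (\<forall>x\<in>convex hull A. \<exists>c\<in>F. \<epsilon> \<le> \<bar>s x c - s b c\<bar>)"
proof -
  have "UNIV \<in> {{b. s b c \<in> U} | c U. open U}" by (intro CollectI exI[of _ 0] exI[of _ UNIV]) auto
  then have top: "topspace (wtop s) = UNIV" unfolding wtop_def by auto
  obtain T where T: "b \<in> T" "openin (wtop s) T" "\<forall>y\<in>convex hull A. y \<notin> T"
    using assms unfolding convw_def in_closure_of top by blast
  obtain F \<epsilon> where F: "finite F" "\<epsilon> > 0" "{x. \<forall>c\<in>F. \<bar>s x c - s b c\<bar> < \<epsilon>} \<subseteq> T"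
    using nbhd[OF T(2) T(1)] by blast
  show ?thesis
  proof (intro exI conjI ballI)
    fix x assume "x \<in> convex hull A"
    then have "x \<notin> T" using T by blast
    then show "\<exists>c\<in>F. \<epsilon> \<le> \<bar>s x c - s b c\<bar>" using F(3) by force
  qed (use F in auto)
qed

lemma qpos_ineq:
  fixes s :: "'a::real_vector \<Rightarrow> 'a \<Rightarrow> real"
  assumes lin: "\<forall>c. linear (\<lambda>b. s b c)" and sym: "\<forall>b c. s b c = s c b"
    and qp: "q_positive s A" and a: "a \<in> A" "a' \<in> A"
  shows "s a a' - qf s a' \<le> qf s a"
proof -
  note B = bil[OF lin sym]
  have "0 \<le> qf s (a - a')" using qp a unfolding q_positive_def by blast
  also have "qf s (a - a') = (s a a - 2 * s a a' + s a' a') / 2"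
    unfolding qf_def B using sym by simp
  finally show ?thesis unfolding qf_def by simp
qed

lemma Phi_on_A:
  fixes s :: "'a::real_vector \<Rightarrow> 'a \<Rightarrow> real"
  assumes lin: "\<forall>c. linear (\<lambda>b. s b c)" and sym: "\<forall>b c. s b c = s c b"
    and qp: "q_positive s A" and a: "a \<in> A"
  shows "PhiA s A a = ereal (qf s a)"
  unfolding PhiA_def
proof (rule antisym)
  show "(SUP a'\<in>A. ereal (s a a' - qf s a')) \<le> ereal (qf s a)"
    using qpos_ineq[OF lin sym qp a] by (intro SUP_least) auto
  have "ereal (qf s a) = ereal (s a a - qf s a)" unfolding qf_def by simp
  also have "\<dots> \<le> (SUP a'\<in>A. ereal (s a a' - qf s a'))" using a by (rule SUP_upper)
  finally show "ereal (qf s a) \<le> (SUP a'\<in>A. ereal (s a a' - qf s a'))" .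
qed

lemma Phi_lower:
  "a \<in> A \<Longrightarrow> ereal (s x a - qf s a) \<le> PhiA s A x"
  unfolding PhiA_def by (rule SUP_upper)

lemma FY: "ereal (s b b) - f b \<le> fenchel_at s f b"
  unfolding fenchel_at_def by (rule SUP_upper2[where i=b]) auto

lemma Phi_le_fen:
  fixes s :: "'a::real_vector \<Rightarrow> 'a \<Rightarrow> real"
  assumes lin: "\<forall>c. linear (\<lambda>b. s b c)" and sym: "\<forall>b c. s b c = s c b"
    and qp: "q_positive s A"
  shows "PhiA s A b \<le> fenchel_at s (PhiA s A) b"
  unfolding PhiA_def[of s A b]
proof (rule SUP_least)
  fix a assume a: "a \<in> A"
  have "ereal (s b a - qf s a) = ereal (s a b) - PhiA s A a"
    using Phi_on_A[OF lin sym qp a] sym by simp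
  also have "\<dots> \<le> fenchel_at s (PhiA s A) b" unfolding fenchel_at_def by (rule SUP_upper) simp
  finally show "ereal (s b a - qf s a) \<le> fenchel_at s (PhiA s A) b" .
qed

lemma fen_inf:
  fixes s :: "'a::real_vector \<Rightarrow> 'a \<Rightarrow> real"
  assumes lin: "\<forall>c. linear (\<lambda>b. s b c)" and sym: "\<forall>b c. s b c = s c b"
    and qp: "q_positive s A" and nb: "b \<notin> convw s A"
  shows "fenchel_at s (PhiA s A) b = \<infinity>"
proof -
  note B = bil[OF lin sym]
  have Ane: "A \<noteq> {}" using qp unfolding q_positive_def by blast
  obtain F \<epsilon> where F: "finite F" "\<epsilon> > 0" "\<forall>x\<in>convex hull A. \<exists>c\<in>F. \<epsilon> \<le> \<bar>s x c - s b c\<bar>"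
    using notin_closure[OF nb] by blast
  obtain c' d where cd: "d > 0" "\<forall>x\<in>convex hull A. s x c' + d \<le> s b c'"
  proof -
    have "convex hull A \<noteq> {}" using Ane by simp
    from sep[OF lin sym convex_convex_hull this F(1) F(2) F(3)] show ?thesis
      by (elim exE conjE) (erule (1) that)
  qed
  have cA: "s a c' + d \<le> s b c'" if "a \<in> A" for a
  proof -
    have "a \<in> convex hull A" by (rule hull_inc[OF that])
    then show ?thesis by (rule bspec[OF cd(2)])
  qed
  obtain a0 where a0: "a0 \<in> A" using Ane by blast
  show ?thesis
  proof (rule ereal_top)
    fix r
    define \<tau> where "\<tau> = max 0 ((r - (s a0 b - qf s a0)) / d)"
    have t0: "\<tau> \<ge> 0" unfolding \<tau>_def by simp
    have td: "\<tau> * d \<ge> r - (s a0 b - qf s a0)"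
    proof -
      have "(r - (s a0 b - qf s a0)) / d \<le> \<tau>" unfolding \<tau>_def by simp
      then show ?thesis using cd(1) by (simp add: field_simps)
    qed
    define x where "x = a0 + \<tau> *\<^sub>R c'"
    have Px: "PhiA s A x \<le> ereal (qf s a0 + \<tau> * (s b c' - d))"
      unfolding PhiA_def
    proof (rule SUP_least)
      fix a assume a: "a \<in> A"
      have 1: "s a0 a - qf s a \<le> qf s a0" using qpos_ineq[OF lin sym qp a0 a] .
      have "s c' a = s a c'" using sym by simp
      then have "\<tau> * s c' a \<le> \<tau> * (s b c' - d)" using cA[OF a] t0
        by (intro mult_left_mono) auto
      moreover have "s x a = s a0 a + \<tau> * s c' a" unfolding x_def B(1) B(3) ..
      ultimately show "ereal (s x a - qf s a) \<le> ereal (qf s a0 + \<tau> * (s b c' - d))"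
        using 1 by simp
    qed
    have "ereal (s x b) - ereal (qf s a0 + \<tau> * (s b c' - d)) \<le> ereal (s x b) - PhiA s A x"
      by (rule ereal_minus_mono[OF order_refl Px])
    also have "\<dots> \<le> fenchel_at s (PhiA s A) b" unfolding fenchel_at_def by (rule SUP_upper) simp
    finally have le: "ereal (s x b - (qf s a0 + \<tau> * (s b c' - d))) \<le> fenchel_at s (PhiA s A) b" by simp
    have "s c' b = s b c'" using sym by simp
    moreover have "s x b = s a0 b + \<tau> * s c' b" unfolding x_def B(1) B(3) ..
    ultimately have "s x b - (qf s a0 + \<tau> * (s b c' - d)) = s a0 b - qf s a0 + \<tau> * d"
      by (simp add: algebra_simps)
    then have "r \<le> s x b - (qf s a0 + \<tau> * (s b c' - d))" using td by simp
    then have "ereal r \<le> ereal (s x b - (qf s a0 + \<tau> * (s b c' - d)))" by simp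
    then show "ereal r \<le> fenchel_at s (PhiA s A) b" using le by (rule order_trans)
  qed
qed

theorem mainTheorem11:
  fixes s :: "'a::real_vector \<Rightarrow> 'a \<Rightarrow> real" and A :: "'a set"
  assumes "SSD_space s"
    and "q_positive s A"
    and "\<forall>b\<in>convw s A. PhiA s A b \<ge> ereal (qf s b)"
  shows "Gf s (PhiA s A) = Pq s (fenchel_at s (PhiA s A))"
proof -
  have lin: "\<forall>c. linear (\<lambda>b. s b c)" and sym: "\<forall>b c. s b c = s c b"
    using assms(1) unfolding SSD_space_def by auto
  note qp = assms(2)
  obtain a0 where a0: "a0 \<in> A" using qp unfolding q_positive_def by blast
  have Pnm: "PhiA s A b \<noteq> -\<infinity>" for b
    using Phi_lower[OF a0, of s b] by auto
  have sbb: "s b b = 2 * qf s b" for b unfolding qf_def by simp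
  show ?thesis
  proof (intro set_eqI iffI)
    fix b assume "b \<in> Pq s (fenchel_at s (PhiA s A))"
    then have R: "fenchel_at s (PhiA s A) b = ereal (qf s b)" unfolding Pq_def by simp
    have le: "PhiA s A b \<le> ereal (qf s b)" using Phi_le_fen[OF lin sym qp, of b] R by simp
    have fy: "ereal (s b b) - PhiA s A b \<le> ereal (qf s b)" using FY[of s b "PhiA s A"] R by simp
    obtain p where p: "PhiA s A b = ereal p" using le Pnm[of b] by (cases "PhiA s A b") auto
    have "p = qf s b" using le fy p sbb[of b] by simp
    then show "b \<in> Gf s (PhiA s A)" unfolding Gf_def using R p sbb[of b] by simp
  next
    fix b assume "b \<in> Gf s (PhiA s A)"
    then have G: "PhiA s A b + fenchel_at s (PhiA s A) b = ereal (s b b)" unfolding Gf_def by simp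
    have le: "PhiA s A b \<le> fenchel_at s (PhiA s A) b" using Phi_le_fen[OF lin sym qp] .
    obtain p where p: "PhiA s A b = ereal p"
      using G Pnm[of b] by (cases "PhiA s A b") auto
    obtain r where r: "fenchel_at s (PhiA s A) b = ereal r"
      using G le p by (cases "fenchel_at s (PhiA s A) b") auto
    have "b \<in> convw s A" using fen_inf[OF lin sym qp, of b] r by force
    then have "p \<ge> qf s b" using assms(3) p by force
    moreover have "p \<le> r" using le p r by simp
    moreover have "p + r = s b b" using G p r by simp
    ultimately have "r = qf s b" using sbb[of b] by linarith
    then show "b \<in> Pq s (fenchel_at s (PhiA s A))" unfolding Pq_def using r by simp
  qed
qed

end
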